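(* Let $p$ be an odd prime. Then $$\sum_{k=0}^{[p/4]}\binom{4k}{2k}\frac1{32^k}\equiv\begin{cases}1\pmod p&\text{if }p\equiv\pm1,\pm3\pmod{16},\\-1\pmod p&\text{if }p\equiv\pm5,\pm7\pmod{16}.\end{cases}$$
   Context: $[x]$ is the greatest integer $\le x$. *)

theory Defs
  imports Complex_Main "HOL-Computational_Algebra.Primes"
begin

text \<open>Congruence of rational numbers modulo an integer p: q and r are congruent
  mod p if q - r = a / b with integers a, b, where p divides a and p does not divide b
  (i.e. the difference is a p-adic integer divisible by p).\<close>
definition rat_cong :: "rat \<Rightarrow> rat \<Rightarrow> int \<Rightarrow> bool" where
  "rat_cong q r p \<longleftrightarrow> (\<exists>a b::int. b \<noteq> 0 \<and> \<not> p dvd b \<and> p dvd a \<and> q - r = of_int a / of_int b)"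

end

theory Submission
  imports Defs "HOL-Computational_Algebra.Polynomial"
begin

definition MM :: "int poly" where "MM = [:0,1:]^8 + 1"

definition pc :: "int \<Rightarrow> int poly \<Rightarrow> int poly \<Rightarrow> bool" where
 "pc P a b \<longleftrightarrow> (\<exists>u v. a - b = smult P u + MM * v)"

lemma MM_monom: "MM = monom 1 8 + 1"
  unfolding MM_def by (simp add: monom_altdef)
lemma degree_MM: "degree MM = 8"
  unfolding MM_monom by (simp add: degree_add_eq_left degree_monom_eq)
lemma lead_MM: "coeff MM 8 = 1"
  unfolding MM_monom by (simp add: coeff_monom)

lemma pc_const:
  assumes "pc P (of_int a) (of_int b)"
  shows "P dvd a - b"
proof -
  obtain u v where e: "of_int a - of_int b = smult P u + MM * v" using assms pc_def by blast
  have MMnz: "MM \<noteq> 0" using degree_MM by auto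
  obtain q r where qr: "pseudo_divmod u MM = (q, r)" by (metis surj_pair)
  from pseudo_divmod[OF MMnz qr] degree_MM lead_MM
  have u: "u = MM * q + r" and r: "r = 0 \<or> degree r < 8" by auto
  have eq: "[:a - b:] - smult P r = MM * (v + smult P q)"
    using e u by (simp add: of_int_poly algebra_simps smult_add_right)
  have dl: "degree ([:a - b:] - smult P r) < 8"
    using r by (auto intro: le_less_trans[OF degree_diff_le])
  have "v + smult P q = 0"
  proof (rule ccontr)
    assume "v + smult P q \<noteq> 0"
    hence "degree (MM * (v + smult P q)) = 8 + degree (v + smult P q)"
      using MMnz degree_MM by (simp add: degree_mult_eq)
    thus False using dl eq by simp
  qed
  hence "[:a - b:] = smult P r" using eq by simp
  hence "coeff [:a - b:] 0 = coeff (smult P r) 0" by simp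
  hence "a - b = P * coeff r 0" by simp
  thus ?thesis by simp
qed
lemma pc_refl[simp]: "pc P a a" unfolding pc_def by (rule exI[of _ 0], rule exI[of _ 0]) simp
lemma pc_sym: "pc P a b \<Longrightarrow> pc P b a"
  unfolding pc_def by (metis (no_types, opaque_lifting) minus_diff_eq mult_minus_right smult_minus_right minus_add_distrib)
lemma pc_trans[trans]: "pc P a b \<Longrightarrow> pc P b c \<Longrightarrow> pc P a c"
proof -
  assume "pc P a b" "pc P b c"
  then obtain u v u' v' where "a - b = smult P u + MM * v" "b - c = smult P u' + MM * v'" unfolding pc_def by blast
  hence "a - c = smult P (u + u') + MM * (v + v')" by (simp add: algebra_simps smult_add_right)
  thus ?thesis unfolding pc_def by blast
qed
lemma pc_add: "pc P a b \<Longrightarrow> pc P c d \<Longrightarrow> pc P (a + c) (b + d)"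
proof -
  assume "pc P a b" "pc P c d"
  then obtain u v u' v' where "a - b = smult P u + MM * v" "c - d = smult P u' + MM * v'" unfolding pc_def by blast
  hence "(a + c) - (b + d) = smult P (u + u') + MM * (v + v')" by (simp add: algebra_simps smult_add_right)
  thus ?thesis unfolding pc_def by blast
qed
lemma pc_neg: "pc P a b \<Longrightarrow> pc P (- a) (- b)"
proof -
  assume "pc P a b"
  then obtain u v where "a - b = smult P u + MM * v" unfolding pc_def by blast
  hence "(-a) - (-b) = smult P (-u) + MM * (-v)" by (simp add: algebra_simps)
  thus ?thesis unfolding pc_def by blast
qed
lemma pc_diff: "pc P a b \<Longrightarrow> pc P c d \<Longrightarrow> pc P (a - c) (b - d)"
  using pc_add[OF _ pc_neg, of P a b c d] by simp
lemma pc_mult: "pc P a b \<Longrightarrow> pc P c d \<Longrightarrow> pc P (a * c) (b * d)"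
proof -
  assume "pc P a b" "pc P c d"
  then obtain u v u' v' where 1: "a - b = smult P u + MM * v" and 2: "c - d = smult P u' + MM * v'" unfolding pc_def by blast
  have "a * c - b * d = a * (c - d) + (a - b) * d" by (simp add: algebra_simps)
  also have "\<dots> = smult P (a * u' + u * d) + MM * (a * v' + v * d)" unfolding 1 2 by (simp add: algebra_simps smult_add_right)
  finally show ?thesis unfolding pc_def by blast
qed
lemma pc_power: "pc P a b \<Longrightarrow> pc P (a ^ n) (b ^ n)"
  by (induction n) (auto intro: pc_mult)
lemma pc_ident: "a - b = MM * w \<Longrightarrow> pc P a b"
  unfolding pc_def by (rule exI[of _ 0]) auto
lemma pc_smultP: "pc P (smult P u) 0"
  unfolding pc_def by (rule exI[of _ u], rule exI[of _ 0]) simp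
lemma pc_sum: "(\<And>x. x \<in> A \<Longrightarrow> pc P (f x) (g x)) \<Longrightarrow> pc P (sum f A) (sum g A)"
  by (induct A rule: infinite_finite_induct) (auto intro: pc_add)

lemma smult_sum2: "smult c (sum f S) = (\<Sum>i\<in>S. smult c (f i))"
  by (induct S rule: infinite_finite_induct) (auto simp: smult_add_right)

lemma frob:
  fixes a b :: "int poly"
  assumes "prime p"
  shows "pc (int p) ((a + b) ^ p) (a ^ p + b ^ p)"
proof -
  define f where "f = (\<lambda>k. of_nat (p choose k) * a ^ k * b ^ (p - k))"
  define W where "W = (\<Sum>k\<in>{1..<p}. smult (int (p choose k) div int p) (a ^ k * b ^ (p - k)))"
  have p0: "p > 0" using assms prime_gt_0_nat by blast
  have A: "{..p} = insert 0 (insert p {1..<p})" using p0 by auto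
  have B: "0 \<notin> insert p {1..<p}" "p \<notin> {1..<p}" using p0 by auto
  have "(a + b) ^ p = (\<Sum>k\<le>p. f k)" unfolding f_def by (rule binomial_ring)
  also have "\<dots> = f 0 + (f p + (\<Sum>k\<in>{1..<p}. f k))"
    unfolding A by (simp only: sum.insert[OF finite.insertI[OF finite_atLeastLessThan] B(1)] sum.insert[OF finite_atLeastLessThan B(2)])
  also have "f 0 = b ^ p" unfolding f_def by simp
  also have "f p = a ^ p" unfolding f_def by simp
  also have "(\<Sum>k\<in>{1..<p}. f k) = smult (int p) W"
    unfolding W_def smult_sum2
  proof (rule sum.cong[OF refl])
    fix k assume k: "k \<in> {1..<p}"
    have "p dvd (p choose k)" using k assms by (intro dvd_choose_prime) auto
    hence d: "int p * (int (p choose k) div int p) = int (p choose k)" by (simp add: int_dvd_int_iff)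
    show "f k = smult (int p) (smult (int (p choose k) div int p) (a ^ k * b ^ (p - k)))"
      unfolding f_def by (simp add: d of_nat_poly mult.assoc)
  qed
  finally have e: "(a + b) ^ p = b ^ p + (a ^ p + smult (int p) W)" .
  have "pc (int p) (b ^ p + (a ^ p + smult (int p) W)) (b ^ p + (a ^ p + 0))"
    by (intro pc_add pc_refl pc_smultP)
  thus ?thesis unfolding e by (simp add: add.commute)
qed

lemma id_s2: "((x^2 - x^6)^2) - (2) = (x^8 + 1) * (-2 + x^4)" for x :: "'a::idom"
  by algebra

lemma id_c2: "((x - x^7)^2) - (2 + (x^2 - x^6)) = (x^8 + 1) * (-2 + x^6)" for x :: "'a::idom"
  by algebra

lemma id_d2: "((x^3 - x^5)^2) - (2 - (x^2 - x^6)) = (x^8 + 1) * (-2 + x^2)" for x :: "'a::idom"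
  by algebra

lemma id_cd: "((x - x^7) * (x^3 - x^5)) - (x^2 - x^6) = (x^8 + 1) * ((-1) * x^2 + x^4)" for x :: "'a::idom"
  by algebra

lemma id_16: "(x^16) - (1) = (x^8 + 1) * ((-1) * 1 + x^8)" for x :: "'a::idom"
  by algebra

lemma T1: "((x - x^7)*(x^3 - x^5)^2*(x^1 - (x^1)^7) + (x^3 - x^5)*(x - x^7)^2*((x^1)^3 - (x^1)^5)) - (4) = (x^8 + 1) * (-4 + (6) * x^8 + (-4) * x^10 + (2) * x^12 + (-4) * x^14 + (2) * x^16)" for x :: "'a::idom"
  by algebra

lemma T3: "((x - x^7)*(x^3 - x^5)^2*(x^3 - (x^3)^7) + (x^3 - x^5)*(x - x^7)^2*((x^3)^3 - (x^3)^5)) - (-4) = (x^8 + 1) * (4 + (-4) * x^8 + x^10 + (-2) * x^12 + (2) * x^14 + (2) * x^16 + x^18 + (-2) * x^20 + x^22 + (-2) * x^24 + (2) * x^26 + (-2) * x^28 + x^30)" for x :: "'a::idom"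
  by algebra

lemma T5: "((x - x^7)*(x^3 - x^5)^2*(x^5 - (x^5)^7) + (x^3 - x^5)*(x - x^7)^2*((x^5)^3 - (x^5)^5)) - (4) = (x^8 + 1) * (-4 + (4) * x^8 + x^12 + (-2) * x^14 + (-3) * x^16 - x^18 + (2) * x^20 + (3) * x^24 - x^26 - x^30 - x^32 + (2) * x^36 - x^38 + x^40 + (-2) * x^42 + x^44)" for x :: "'a::idom"
  by algebra

lemma T7: "((x - x^7)*(x^3 - x^5)^2*(x^7 - (x^7)^7) + (x^3 - x^5)*(x - x^7)^2*((x^7)^3 - (x^7)^5)) - (-4) = (x^8 + 1) * (4 + (-4) * x^8 + x^14 + (2) * x^16 + x^18 - x^20 + x^22 + (-3) * x^24 - x^30 + x^32 + (2) * x^34 + (2) * x^38 + (-3) * x^40 - x^42 + x^48 + x^50 - x^52 + x^54 + (-2) * x^56 + x^58)" for x :: "'a::idom"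
  by algebra

lemma U1: "((x^2 - x^6)*((x^1)^2 - (x^1)^6)) - (2) = (x^8 + 1) * (-2 + x^4)" for x :: "'a::idom"
  by algebra

lemma U3: "((x^2 - x^6)*((x^3)^2 - (x^3)^6)) - (-2) = (x^8 + 1) * (2 - x^8 - x^12 + x^16)" for x :: "'a::idom"
  by algebra

lemma U5: "((x^2 - x^6)*((x^5)^2 - (x^5)^6)) - (-2) = (x^8 + 1) * (2 + (-2) * x^8 + x^12 + x^16 - x^20 - x^24 + x^28)" for x :: "'a::idom"
  by algebra

lemma U7: "((x^2 - x^6)*((x^7)^2 - (x^7)^6)) - (2) = (x^8 + 1) * (-2 + (2) * x^8 - x^16 - x^20 + x^24 + x^28 - x^32 - x^36 + x^40)" for x :: "'a::idom"
  by algebra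


definition Xp :: "int poly" where "Xp = [:0,1:]"
definition cc :: "int poly" where "cc = Xp - Xp^7"
definition dd :: "int poly" where "dd = Xp^3 - Xp^5"
definition ss :: "int poly" where "ss = Xp^2 - Xp^6"

lemma MM_Xp: "MM = Xp^8 + 1" by (simp add: MM_def Xp_def)
lemma pcI: "a - b = (Xp^8 + 1) * w \<Longrightarrow> pc P a b" using pc_ident MM_Xp by metis

lemma pc_s2: "pc P (ss^2) 2" unfolding ss_def by (rule pcI[OF id_s2])
lemma pc_c2: "pc P (cc^2) (2 + ss)" unfolding ss_def cc_def by (rule pcI[OF id_c2])
lemma pc_d2: "pc P (dd^2) (2 - ss)" unfolding ss_def dd_def by (rule pcI[OF id_d2])
lemma pc_cd: "pc P (cc * dd) ss" unfolding ss_def cc_def dd_def by (rule pcI[OF id_cd])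
lemma pc_16: "pc P (Xp^16) 1" by (rule pcI[OF id_16])

lemma Xpow_mod: "pc P (Xp^n) (Xp^(n mod 16))"
proof -
  have "Xp^n = Xp^(16*(n div 16) + n mod 16)" by simp
  also have "\<dots> = (Xp^16)^(n div 16) * Xp^(n mod 16)" by (simp only: power_add power_mult)
  also have "pc P \<dots> (1^(n div 16) * Xp^(n mod 16))"
    by (intro pc_mult pc_power pc_16 pc_refl)
  finally show ?thesis by simp
qed

lemma X8: "pc P (Xp^(r+8)) (uminus (Xp^r))"
  by (rule pcI[of _ _ "Xp^r"]) (simp add: power_add distrib_right)

lemma frob_diff:
  assumes "prime p" "odd p"
  shows "pc (int p) ((a - b)^p) (a^p - b^p)"
  using frob[OF assms(1), of a "-b"] assms(2) by simp

lemma binom_pc: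
  assumes s2: "pc P (s^2) 2"
  shows "pc P ((2 + s)^h + (2 - s)^h)
     (of_int (\<Sum>j\<le>h. int (h choose j) * 2^(h-j) * (if even j then 2 * 2^(j div 2) else 0)))"
proof -
  have e1: "(2 + s)^h = (\<Sum>j\<le>h. of_nat (h choose j) * s^j * 2^(h-j))"
    using binomial_ring[of s 2 h] by (simp add: add.commute)
  have e2: "(2 - s)^h = (\<Sum>j\<le>h. of_nat (h choose j) * (-s)^j * 2^(h-j))"
    using binomial_ring[of "-s" 2 h] by (simp add: add.commute)
  have "(2 + s)^h + (2 - s)^h = (\<Sum>j\<le>h. of_nat (h choose j) * 2^(h-j) * (s^j + (-s)^j))"
    unfolding e1 e2 sum.distrib[symmetric] by (rule sum.cong) (simp_all add: algebra_simps)
  also have "pc P \<dots> (\<Sum>j\<le>h. of_nat (h choose j) * 2^(h-j) * of_int (if even j then 2 * 2^(j div 2) else 0))"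
  proof (rule pc_sum, rule pc_mult[OF pc_refl])
    fix j
    show "pc P (s ^ j + (- s) ^ j) (of_int (if even j then 2 * 2 ^ (j div 2) else 0))"
    proof (cases "even j")
      case True
      then obtain i where j: "j = 2 * i" by (auto elim: evenE)
      have "s ^ j + (- s) ^ j = 2 * (s^2)^i" using j by (simp add: power_mult)
      also have "pc P \<dots> (2 * 2^i)" by (intro pc_mult pc_power s2 pc_refl)
      finally show ?thesis using True j by simp
    next
      case False
      then show ?thesis by simp
    qed
  qed
  also have "(\<Sum>j\<le>h. of_nat (h choose j) * 2^(h-j) * of_int (if even j then 2 * 2^(j div 2) else 0))
      = (of_int (\<Sum>j\<le>h. int (h choose j) * 2^(h-j) * (if even j then 2 * 2^(j div 2) else 0)) :: int poly)"
    by (simp add: of_int_sum)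
  finally show ?thesis .
qed


lemma sum_even:
  fixes F :: "nat \<Rightarrow> int"
  shows "(\<Sum>j\<le>n. if even j then F j else 0) = (\<Sum>k\<le>n div 2. F (2*k))"
proof (induction n)
  case 0 then show ?case by simp
next
  case (Suc n)
  show ?case
  proof (cases "even (Suc n)")
    case True
    then have e: "Suc n div 2 = Suc (n div 2)" "2 * Suc (n div 2) = Suc n" by presburger+
    show ?thesis using Suc True by (simp add: e)
  next
    case False
    then have e: "Suc n div 2 = n div 2" by presburger
    show ?thesis using Suc False by (simp add: e)
  qed
qed

lemma B_eq:
  assumes hm: "h div 2 = m"
  shows "(\<Sum>j\<le>h. int (h choose j) * 2^(h-j) * (if even j then 2 * 2^(j div 2) else 0))
       = 2 * 2^(h-m) * (\<Sum>k\<le>m. int (h choose (2*k)) * 2^(m - k))"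
proof -
  have "(\<Sum>j\<le>h. int (h choose j) * 2^(h-j) * (if even j then 2 * 2^(j div 2) else 0))
      = (\<Sum>j\<le>h. if even j then int (h choose j) * 2^(h-j) * (2 * 2^(j div 2)) else 0)"
    by (rule sum.cong) auto
  also have "\<dots> = (\<Sum>k\<le>m. int (h choose (2*k)) * 2^(h-2*k) * (2 * 2^((2*k) div 2)))"
    using sum_even[of "\<lambda>j. int (h choose j) * 2^(h-j) * (2 * 2^(j div 2))" h] hm by simp
  also have "\<dots> = (\<Sum>k\<le>m. 2 * 2^(h-m) * (int (h choose (2*k)) * 2^(m - k)))"
  proof (rule sum.cong[OF refl])
    fix k assume "k \<in> {..m}"
    hence k: "k \<le> m" "2*k \<le> h" using hm by auto
    have "h - 2*k + k = h - m + (m - k)" using k hm by linarith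
    hence "(2::int)^(h-2*k) * 2^k = 2^(h-m) * 2^(m-k)" by (simp flip: power_add)
    thus "int (h choose (2*k)) * 2^(h-2*k) * (2 * 2^((2*k) div 2)) = 2 * 2^(h-m) * (int (h choose (2*k)) * 2^(m - k))"
      by (simp add: mult_ac)
  qed
  also have "\<dots> = 2 * 2^(h-m) * (\<Sum>k\<le>m. int (h choose (2*k)) * 2^(m - k))"
    by (simp add: sum_distrib_left)
  finally show ?thesis .
qed

lemma prime_cancel:
  fixes P c x :: int
  assumes "prime P" "\<not> P dvd c" "P dvd c * x"
  shows "P dvd x"
  using assms prime_dvd_mult_iff by blast

lemma odd_prime_not_dvd_pow2:
  assumes "prime p" "odd p"
  shows "\<not> int p dvd 2^n"
proof
  assume "int p dvd 2^n"
  hence "int p dvd 2" using prime_dvd_power assms(1) by (metis prime_nat_int_transfer)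
  hence "p dvd 2" by (metis int_dvd_int_iff of_nat_numeral)
  hence "p \<le> 2" by (simp add: dvd_imp_le)
  moreover have "p \<ge> 2" using assms(1) prime_ge_2_nat by blast
  ultimately show False using assms(2) by simp
qed

lemma key:
  fixes p r :: nat and \<sigma> :: int
  assumes pr: "prime p" and od: "odd p"
    and hX: "pc (int p) (Xp^p) (of_int \<sigma> * Xp^r)"
    and sg: "\<sigma> = 1 \<or> \<sigma> = -1" and rr: "r = 1 \<or> r = 3 \<or> r = 5 \<or> r = 7"
  shows "int p dvd (\<Sum>k\<le>p div 4. int (((p - 1) div 2) choose (2*k)) * 2^(p div 4 - k))
                  - (if r = 1 \<or> r = 3 then \<sigma> else -\<sigma>) * 2^(p div 4)"
proof -
  define P where "P = int p"
  define h where "h = (p - 1) div 2"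
  define m where "m = p div 4"
  define A where "A = (\<Sum>k\<le>m. int (h choose (2*k)) * 2^(m - k))"
  define S :: "int poly" where "S = of_int \<sigma>"
  define \<eta> where "\<eta> = (if r = 1 \<or> r = 5 then 1 else -1 :: int)"
  define \<chi> where "\<chi> = (if r = 1 \<or> r = 7 then 1 else -1 :: int)"
  have PP: "prime P" using pr by (simp add: P_def)
  have Spow: "S^2 = 1" "S^3 = S" "S^5 = S" "S^6 = 1" "S^7 = S" using sg by (auto simp: S_def)
  have p2h: "p = Suc (2*h)" using od unfolding h_def by (auto elim!: oddE)
  have hm: "h div 2 = m" unfolding m_def using p2h by presburger
  have hX': "pc P (Xp^p) (S * Xp^r)" using hX by (simp add: P_def S_def)
  have Xj: "pc P ((Xp^j)^p) (S^j * (Xp^r)^j)" for j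
  proof -
    have "(Xp^j)^p = (Xp^p)^j" by (simp add: power_mult[symmetric] mult.commute)
    also have "pc P \<dots> ((S * Xp^r)^j)" using hX' by (rule pc_power)
    also have "(S * Xp^r)^j = S^j * (Xp^r)^j" by (simp add: power_mult_distrib)
    finally show ?thesis .
  qed
  have cp: "pc P (cc^p) (S * (Xp^r - (Xp^r)^7))"
  proof -
    have "pc P (cc^p) (Xp^p - (Xp^7)^p)" unfolding cc_def P_def by (rule frob_diff[OF pr od])
    also have "pc P \<dots> (S * Xp^r - S^7 * (Xp^r)^7)" by (intro pc_diff hX' Xj)
    also have "S * Xp^r - S^7 * (Xp^r)^7 = S * (Xp^r - (Xp^r)^7)" using Spow by (simp add: algebra_simps)
    finally show ?thesis .
  qed
  have dp: "pc P (dd^p) (S * ((Xp^r)^3 - (Xp^r)^5))"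
  proof -
    have "pc P (dd^p) ((Xp^3)^p - (Xp^5)^p)" unfolding dd_def P_def by (rule frob_diff[OF pr od])
    also have "pc P \<dots> (S^3 * (Xp^r)^3 - S^5 * (Xp^r)^5)" by (intro pc_diff Xj)
    also have "S^3 * (Xp^r)^3 - S^5 * (Xp^r)^5 = S * ((Xp^r)^3 - (Xp^r)^5)" using Spow by (simp add: algebra_simps)
    finally show ?thesis .
  qed
  have sp: "pc P (ss^p) ((Xp^r)^2 - (Xp^r)^6)"
  proof -
    have "pc P (ss^p) ((Xp^2)^p - (Xp^6)^p)" unfolding ss_def P_def by (rule frob_diff[OF pr od])
    also have "pc P \<dots> (S^2 * (Xp^r)^2 - S^6 * (Xp^r)^6)" by (intro pc_diff Xj)
    also have "S^2 * (Xp^r)^2 - S^6 * (Xp^r)^6 = (Xp^r)^2 - (Xp^r)^6" using Spow by simp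
    finally show ?thesis .
  qed
  have T: "pc P (cc*dd^2*(Xp^r - (Xp^r)^7) + dd*cc^2*((Xp^r)^3 - (Xp^r)^5)) (of_int (4*\<eta>))"
    using rr
  proof (elim disjE)
    assume r: "r = 1"
    have "pc P (cc*dd^2*(Xp^1 - (Xp^1)^7) + dd*cc^2*((Xp^1)^3 - (Xp^1)^5)) 4"
      unfolding cc_def dd_def by (rule pcI[OF T1])
    thus ?thesis using r by (simp add: \<eta>_def)
  next
    assume r: "r = 3"
    have "pc P (cc*dd^2*(Xp^3 - (Xp^3)^7) + dd*cc^2*((Xp^3)^3 - (Xp^3)^5)) (-4)"
      unfolding cc_def dd_def by (rule pcI[OF T3])
    thus ?thesis using r by (simp add: \<eta>_def)
  next
    assume r: "r = 5"
    have "pc P (cc*dd^2*(Xp^5 - (Xp^5)^7) + dd*cc^2*((Xp^5)^3 - (Xp^5)^5)) 4"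
      unfolding cc_def dd_def by (rule pcI[OF T5])
    thus ?thesis using r by (simp add: \<eta>_def)
  next
    assume r: "r = 7"
    have "pc P (cc*dd^2*(Xp^7 - (Xp^7)^7) + dd*cc^2*((Xp^7)^3 - (Xp^7)^5)) (-4)"
      unfolding cc_def dd_def by (rule pcI[OF T7])
    thus ?thesis using r by (simp add: \<eta>_def)
  qed
  have U: "pc P (ss*((Xp^r)^2 - (Xp^r)^6)) (of_int (2*\<chi>))"
    using rr
  proof (elim disjE)
    assume r: "r = 1"
    have "pc P (ss*((Xp^1)^2 - (Xp^1)^6)) 2" unfolding ss_def by (rule pcI[OF U1])
    thus ?thesis using r by (simp add: \<chi>_def)
  next
    assume r: "r = 3"
    have "pc P (ss*((Xp^3)^2 - (Xp^3)^6)) (-2)" unfolding ss_def by (rule pcI[OF U3])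
    thus ?thesis using r by (simp add: \<chi>_def)
  next
    assume r: "r = 5"
    have "pc P (ss*((Xp^5)^2 - (Xp^5)^6)) (-2)" unfolding ss_def by (rule pcI[OF U5])
    thus ?thesis using r by (simp add: \<chi>_def)
  next
    assume r: "r = 7"
    have "pc P (ss*((Xp^7)^2 - (Xp^7)^6)) 2" unfolding ss_def by (rule pcI[OF U7])
    thus ?thesis using r by (simp add: \<chi>_def)
  qed
  have cd2: "pc P ((cc*dd)^2) 2" by (rule pc_trans[OF pc_power[OF pc_cd] pc_s2])
  have cstep: "pc P (2 * cc^(2*h)) (cc*dd^2*cc^p)"
  proof -
    have "cc*dd^2*cc^p = cc^(2*h) * (cc*dd)^2" unfolding p2h by (simp add: power2_eq_square mult_ac)
    moreover have "pc P (cc^(2*h) * (cc*dd)^2) (cc^(2*h) * 2)" by (intro pc_mult pc_refl cd2)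
    ultimately show ?thesis by (simp add: pc_sym mult.commute)
  qed
  have dstep: "pc P (2 * dd^(2*h)) (dd*cc^2*dd^p)"
  proof -
    have "dd*cc^2*dd^p = dd^(2*h) * (cc*dd)^2" unfolding p2h by (simp add: power2_eq_square mult_ac)
    moreover have "pc P (dd^(2*h) * (cc*dd)^2) (dd^(2*h) * 2)" by (intro pc_mult pc_refl cd2)
    ultimately show ?thesis by (simp add: pc_sym mult.commute)
  qed
  define B where "B = (\<Sum>j\<le>h. int (h choose j) * 2^(h-j) * (if even j then 2 * 2^(j div 2) else 0))"
  have BA: "B = 2 * 2^(h-m) * A" unfolding B_def A_def by (rule B_eq[OF hm])
  have E1: "pc P ((2 + ss)^h + (2 - ss)^h) (of_int B)" unfolding B_def by (rule binom_pc[OF pc_s2])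
  have c2: "pc P ((2 + ss)^h) (cc^(2*h))"
    using pc_power[OF pc_sym[OF pc_c2[where P=P]], where n=h] by (simp add: power_mult)
  have d2: "pc P ((2 - ss)^h) (dd^(2*h))"
    using pc_power[OF pc_sym[OF pc_d2[where P=P]], where n=h] by (simp add: power_mult)
  have "pc P (of_int (2*B)) (2 * ((2 + ss)^h + (2 - ss)^h))"
    using pc_mult[OF pc_refl[where a=2] pc_sym[OF E1]] by simp
  also have "2 * ((2 + ss)^h + (2 - ss)^h) = 2 * (2 + ss)^h + 2 * (2 - ss)^h" by (simp add: algebra_simps)
  also have "pc P \<dots> (2 * cc^(2*h) + 2 * dd^(2*h))" by (intro pc_add pc_mult pc_refl c2 d2)
  also have "pc P \<dots> (cc*dd^2*cc^p + dd*cc^2*dd^p)" by (intro pc_add cstep dstep)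
  also have "pc P \<dots> (cc*dd^2*(S * (Xp^r - (Xp^r)^7)) + dd*cc^2*(S * ((Xp^r)^3 - (Xp^r)^5)))"
    by (intro pc_add pc_mult pc_refl cp dp)
  also have "\<dots> = S * (cc*dd^2*(Xp^r - (Xp^r)^7) + dd*cc^2*((Xp^r)^3 - (Xp^r)^5))" by (simp add: algebra_simps)
  also have "pc P \<dots> (S * of_int (4*\<eta>))" by (intro pc_mult pc_refl T)
  also have "S * of_int (4*\<eta>) = of_int (\<sigma>*(4*\<eta>))" by (simp add: S_def)
  finally have "P dvd 2*B - \<sigma>*(4*\<eta>)" by (rule pc_const)
  hence "P dvd 4 * (2^(h-m)*A - \<sigma>*\<eta>)" unfolding BA by (simp add: algebra_simps)
  moreover have "\<not> P dvd 4" using odd_prime_not_dvd_pow2[OF pr od, of 2] by (simp add: P_def)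
  ultimately have D1: "P dvd 2^(h-m)*A - \<sigma>*\<eta>" using prime_cancel[OF PP] by blast
  have "pc P (of_int (2^h*2)) ((ss^2)^h * ss^2)" by (simp add: pc_sym pc_mult pc_power pc_s2)
  also have "(ss^2)^h * ss^2 = ss * ss^p"
  proof -
    have "(ss^2)^h * ss^2 = ss^(2*h + 2)" by (simp only: power_mult power_add)
    moreover have "ss * ss^p = ss^(2*h + 2)" unfolding p2h by simp
    ultimately show ?thesis by (rule trans[OF _ sym])
  qed
  also have "pc P \<dots> (ss * ((Xp^r)^2 - (Xp^r)^6))" by (intro pc_mult pc_refl sp)
  also have "pc P \<dots> (of_int (2*\<chi>))" by (rule U)
  finally have "P dvd 2^h*2 - 2*\<chi>" by (rule pc_const)
  hence "P dvd 2 * (2^h - \<chi>)" by (simp add: algebra_simps)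
  moreover have "\<not> P dvd 2" using odd_prime_not_dvd_pow2[OF pr od, of 1] by (simp add: P_def)
  ultimately have D2: "P dvd 2^h - \<chi>" using prime_cancel[OF PP] by blast
  have mh: "m \<le> h" using hm by linarith
  have e1: "(2::int)^m * 2^(h-m) = 2^h" using mh by (simp flip: power_add)
  have cc1: "\<chi> * \<chi> = 1" by (simp add: \<chi>_def)
  have eps: "(if r = 1 \<or> r = 3 then \<sigma> else -\<sigma>) = \<chi> * \<sigma> * \<eta>" using rr by (auto simp: \<chi>_def \<eta>_def)
  have "A - \<chi>*\<sigma>*\<eta> * 2^m = \<chi> * (2^m * (2^(h-m)*A - \<sigma>*\<eta>) - A * (2^h - \<chi>))"
  proof -
    have "\<chi> * (2^m * (2^(h-m)*A - \<sigma>*\<eta>) - A * (2^h - \<chi>)) = \<chi> * ((2^m * 2^(h-m))*A - 2^m*\<sigma>*\<eta> - A * 2^h) + (\<chi>*\<chi>) * A"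
      by (simp add: algebra_simps)
    also have "\<dots> = A - \<chi>*\<sigma>*\<eta> * 2^m" unfolding e1 cc1 by (simp add: algebra_simps)
    finally show ?thesis by simp
  qed
  moreover have "P dvd \<chi> * (2^m * (2^(h-m)*A - \<sigma>*\<eta>) - A * (2^h - \<chi>))"
  proof -
    have a: "P dvd 2^m * (2^(h-m)*A - \<sigma>*\<eta>)" using D1 by simp
    have b: "P dvd A * (2^h - \<chi>)" using D2 by simp
    show ?thesis using dvd_diff[OF a b] by (rule dvd_mult)
  qed
  ultimately have "P dvd A - \<chi>*\<sigma>*\<eta> * 2^m" by simp
  thus ?thesis unfolding eps A_def P_def m_def h_def .
qed


declare binomial_Suc_Suc[simp del]

lemma cb:
  assumes pr: "prime p" and od: "odd p"
  shows "n \<le> (p - 1) div 2 \<Longrightarrow> int p dvd int ((2*n) choose n) - (-4)^n * int (((p - 1) div 2) choose n)"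
proof (induction n)
  case 0 then show ?case by simp
next
  case (Suc n)
  define h where "h = (p - 1) div 2"
  have p2h: "int p = 2 * int h + 1" using od unfolding h_def by (auto elim!: oddE)
  have nh: "Suc n \<le> h" using Suc.prems h_def by simp
  have IH: "int p dvd int ((2*n) choose n) - (-4)^n * int (h choose n)" using Suc nh h_def by simp
  have r1: "Suc n * ((2 * Suc n) choose Suc n) = 2 * (2*n+1) * ((2*n) choose n)"
  proof -
    have a: "Suc n * (Suc (Suc (2*n)) choose Suc n) = Suc (Suc (2*n)) * (Suc (2*n) choose n)" by (rule Suc_times_binomial)
    have b: "Suc n * (Suc (2*n) choose Suc n) = Suc (2*n) * ((2*n) choose n)" by (rule Suc_times_binomial)
    have c: "(Suc (2*n) choose n) = (Suc (2*n) choose Suc n)" using binomial_symmetric[of n "Suc (2*n)"] by simp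
    have "Suc n * (Suc n * (Suc (Suc (2*n)) choose Suc n)) = Suc n * (Suc (Suc (2*n)) * (Suc (2*n) choose Suc n))"
      by (simp only: a c)
    also have "\<dots> = Suc (Suc (2*n)) * (Suc n * (Suc (2*n) choose Suc n))" by (rule mult.left_commute)
    also have "\<dots> = Suc (Suc (2*n)) * (Suc (2*n) * ((2*n) choose n))" by (simp only: b)
    also have "\<dots> = Suc n * (2 * (2*n+1) * ((2*n) choose n))" by simp
    finally have "Suc n * (Suc n * (Suc (Suc (2*n)) choose Suc n)) = Suc n * (2 * (2*n+1) * ((2*n) choose n))" .
    hence "Suc n * (Suc (Suc (2*n)) choose Suc n) = 2 * (2*n+1) * ((2*n) choose n)"
      using mult_left_cancel[of "Suc n"] by simp
    moreover have "2 * Suc n = Suc (Suc (2*n))" by simp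
    ultimately show ?thesis by simp
  qed
  have r2: "Suc n * (h choose Suc n) = (h - n) * (h choose n)"
    by (simp only: binomial_absorption binomial_absorb_comp)
  have r1': "int (Suc n) * int ((2 * Suc n) choose Suc n) = 2 * (2*int n+1) * int ((2*n) choose n)"
    using arg_cong[OF r1, of int] by (simp add: algebra_simps)
  have r2': "int (Suc n) * int (h choose Suc n) = (int h - int n) * int (h choose n)"
    using arg_cong[OF r2, of int] nh by (simp add: of_nat_diff algebra_simps)
  have e: "int (Suc n) * (int ((2 * Suc n) choose Suc n) - (-4)^Suc n * int (h choose Suc n))
     = 2*(2*int n+1) * (int ((2*n) choose n) - (-4)^n * int (h choose n)) + (-4)^n * int (h choose n) * 2 * int p"
  proof -
    have "int (Suc n) * (int ((2 * Suc n) choose Suc n) - (-4)^Suc n * int (h choose Suc n))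
        = int (Suc n) * int ((2 * Suc n) choose Suc n) - (-4)^Suc n * (int (Suc n) * int (h choose Suc n))"
      by (simp add: algebra_simps)
    also have "\<dots> = 2 * (2*int n+1) * int ((2*n) choose n) - (-4) * (-4)^n * ((int h - int n) * int (h choose n))"
      unfolding r1' r2' by simp
    also have "\<dots> = 2*(2*int n+1) * (int ((2*n) choose n) - (-4)^n * int (h choose n)) + (-4)^n * int (h choose n) * 2 * int p"
      unfolding p2h by (simp add: algebra_simps)
    finally show ?thesis .
  qed
  have "int p dvd int (Suc n) * (int ((2 * Suc n) choose Suc n) - (-4)^Suc n * int (h choose Suc n))"
  proof -
    have a: "int p dvd 2*(2*int n+1) * (int ((2*n) choose n) - (-4)^n * int (h choose n))"
      using IH by (rule dvd_mult)
    have b: "int p dvd (-4)^n * int (h choose n) * 2 * int p" by (rule dvd_triv_right)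
    show ?thesis unfolding e using a b by (rule dvd_add)
  qed
  moreover have "\<not> int p dvd int (Suc n)"
  proof
    assume "int p dvd int (Suc n)"
    hence "p dvd Suc n" using int_dvd_int_iff by blast
    hence "p \<le> Suc n" using dvd_imp_le by blast
    thus False using nh p2h by linarith
  qed
  moreover have pp: "prime (int p)" using pr by simp
  ultimately have "int p dvd int ((2 * Suc n) choose Suc n) - (-4)^Suc n * int (h choose Suc n)"
    using prime_cancel by blast
  thus ?case unfolding h_def .
qed

lemma final:
  fixes p :: nat and \<epsilon> :: int
  assumes pr: "prime p" and od: "odd p"
   and hA: "int p dvd (\<Sum>k\<le>p div 4. int (((p - 1) div 2) choose (2*k)) * 2^(p div 4 - k)) - \<epsilon> * 2^(p div 4)"
  shows "rat_cong (\<Sum>k = 0..p div 4. of_nat ((4*k) choose (2*k)) / 32 ^ k) (of_int \<epsilon>) (int p)"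
proof -
  define P where "P = int p"
  define h where "h = (p - 1) div 2"
  define m where "m = p div 4"
  define A where "A = (\<Sum>k\<le>m. int (h choose (2*k)) * 2^(m - k))"
  define N where "N = (\<Sum>k\<le>m. int ((4*k) choose (2*k)) * 32^(m - k))"
  have p2h: "p = Suc (2*h)" using od unfolding h_def by (auto elim!: oddE)
  have mh: "2 * m \<le> h" unfolding m_def using p2h by presburger
  have d1: "P dvd N - 16^m * A"
  proof -
    have "N - 16^m * A = (\<Sum>k\<le>m. (int ((2*(2*k)) choose (2*k)) - (-4)^(2*k) * int (h choose (2*k))) * 32^(m - k))"
      unfolding N_def A_def sum_distrib_left sum_subtractf[symmetric]
    proof (rule sum.cong[OF refl])
      fix k assume "k \<in> {..m}"
      hence k: "k \<le> m" by simp
      have "(16::int)^m * 2^(m-k) = 16^k * 32^(m-k)"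
      proof -
        have "(16::int)^m = 16^k * 16^(m-k)" using k by (simp flip: power_add)
        moreover have "(32::int)^(m-k) = 16^(m-k) * 2^(m-k)" by (simp flip: power_mult_distrib)
        ultimately show ?thesis by simp
      qed
      moreover have "(-4::int)^(2*k) = 16^k" by (simp add: power_mult)
      moreover have "2*(2*k) = 4*k" by simp
      ultimately show "int ((4*k) choose (2*k)) * 32^(m - k) - 16^m * (int (h choose (2*k)) * 2^(m - k))
          = (int ((2*(2*k)) choose (2*k)) - (-4)^(2*k) * int (h choose (2*k))) * 32^(m - k)"
        by (simp add: algebra_simps)
    qed
    also have "P dvd \<dots>"
    proof (rule dvd_sum)
      fix k assume "k \<in> {..m}"
      hence "2*k \<le> (p - 1) div 2" using mh h_def by simp
      from cb[OF pr od this] show "P dvd (int ((2*(2*k)) choose (2*k)) - (-4)^(2*k) * int (h choose (2*k))) * 32^(m - k)"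
        unfolding P_def h_def by simp
    qed
    finally show ?thesis .
  qed
  have d2: "P dvd N - \<epsilon> * 32^m"
  proof -
    have p32: "(16::int)^m * 2^m = 32^m" by (simp flip: power_mult_distrib)
    have "N - \<epsilon> * 32^m = (N - 16^m * A) + 16^m * (A - \<epsilon> * 2^m)"
      unfolding p32[symmetric] by (simp add: algebra_simps)
    moreover have "P dvd A - \<epsilon> * 2^m" using hA unfolding P_def A_def m_def h_def .
    ultimately show ?thesis using d1 by (metis dvd_add dvd_mult)
  qed
  have nd: "\<not> P dvd 32^m"
    using odd_prime_not_dvd_pow2[OF pr od, of "5*m"] unfolding P_def by (simp add: power_mult)
  have S: "(\<Sum>k = 0..p div 4. of_nat ((4*k) choose (2*k)) / 32 ^ k) = (of_int N / of_int (32^m) :: rat)"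
  proof -
    have "(of_int N / of_int (32^m) :: rat) = (\<Sum>k\<le>m. of_int (int ((4*k) choose (2*k)) * 32^(m - k)) / 32^m)"
      unfolding N_def of_int_sum sum_divide_distrib by simp
    also have "\<dots> = (\<Sum>k\<le>m. of_nat ((4*k) choose (2*k)) / 32^k)"
    proof (rule sum.cong[OF refl])
      fix k assume "k \<in> {..m}"
      hence "(32::rat)^m = 32^(m-k) * 32^k" by (simp flip: power_add)
      thus "(of_int (int ((4*k) choose (2*k)) * 32^(m - k)) / 32^m :: rat) = of_nat ((4*k) choose (2*k)) / 32^k"
        by simp
    qed
    finally show ?thesis by (simp add: m_def atLeast0AtMost)
  qed
  show ?thesis unfolding rat_cong_def
  proof (intro exI conjI)
    show "(32::int)^m \<noteq> 0" by simp
    show "\<not> int p dvd 32^m" using nd P_def by simp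
    show "int p dvd N - \<epsilon> * 32^m" using d2 P_def by simp
    show "(\<Sum>k = 0..p div 4. of_nat ((4*k) choose (2*k)) / 32 ^ k) - of_int \<epsilon> = (of_int (N - \<epsilon> * 32^m) / of_int (32^m) :: rat)"
      unfolding S by (simp add: diff_divide_distrib)
  qed
qed


lemma case_lemma:
  fixes p r :: nat and \<sigma> :: int
  assumes pr: "prime p" and od: "odd p"
    and hX: "pc (int p) (Xp^p) (of_int \<sigma> * Xp^r)"
    and sg: "\<sigma> = 1 \<or> \<sigma> = -1" and rr: "r = 1 \<or> r = 3 \<or> r = 5 \<or> r = 7"
  shows "rat_cong (\<Sum>k = 0..p div 4. of_nat ((4*k) choose (2*k)) / 32 ^ k)
           (of_int (if r = 1 \<or> r = 3 then \<sigma> else -\<sigma>)) (int p)"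
  by (rule final[OF pr od key[OF pr od hX sg rr]])

lemma Xp_pos: "p mod 16 = q \<Longrightarrow> pc P (Xp^p) (of_int 1 * Xp^q)"
  using Xpow_mod[of P p] by simp

lemma Xp_neg:
  assumes "p mod 16 = q + 8"
  shows "pc P (Xp^p) (of_int (-1) * Xp^q)"
proof -
  have "pc P (Xp^p) (Xp^(q+8))" using Xpow_mod[of P p] assms by simp
  hence "pc P (Xp^p) (uminus (Xp^q))" using X8[of P q] pc_trans by blast
  thus ?thesis by simp
qed

theorem corollary2p3:
  fixes p :: nat
  assumes "prime p" and "odd p"
  shows "(p mod 16 \<in> {1, 15, 3, 13} \<longrightarrow>
            rat_cong (\<Sum>k = 0..p div 4. of_nat ((4*k) choose (2*k)) / 32 ^ k) 1 (int p))
       \<and> (p mod 16 \<in> {5, 11, 7, 9} \<longrightarrow>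
            rat_cong (\<Sum>k = 0..p div 4. of_nat ((4*k) choose (2*k)) / 32 ^ k) (-1) (int p))"
proof -
  note pr = assms(1) and od = assms(2)
  have "p mod 16 = 1 \<or> p mod 16 = 3 \<or> p mod 16 = 5 \<or> p mod 16 = 7 \<or>
        p mod 16 = 9 \<or> p mod 16 = 11 \<or> p mod 16 = 13 \<or> p mod 16 = 15"
    using od by presburger
  then show ?thesis
  proof (elim disjE)
    assume h: "p mod 16 = 1"
    have "rat_cong (\<Sum>k = 0..p div 4. of_nat ((4*k) choose (2*k)) / 32 ^ k)
           (of_int (if (1::nat) = 1 \<or> (1::nat) = 3 then 1 else -1)) (int p)"
      by (rule case_lemma[OF pr od Xp_pos[OF h]]) auto
    thus ?thesis using h by simp
  next
    assume h: "p mod 16 = 3"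
    have "rat_cong (\<Sum>k = 0..p div 4. of_nat ((4*k) choose (2*k)) / 32 ^ k)
           (of_int (if (3::nat) = 1 \<or> (3::nat) = 3 then 1 else -1)) (int p)"
      by (rule case_lemma[OF pr od Xp_pos[OF h]]) auto
    thus ?thesis using h by simp
  next
    assume h: "p mod 16 = 5"
    have "rat_cong (\<Sum>k = 0..p div 4. of_nat ((4*k) choose (2*k)) / 32 ^ k)
           (of_int (if (5::nat) = 1 \<or> (5::nat) = 3 then 1 else -1)) (int p)"
      by (rule case_lemma[OF pr od Xp_pos[OF h]]) auto
    thus ?thesis using h by simp
  next
    assume h: "p mod 16 = 7"
    have "rat_cong (\<Sum>k = 0..p div 4. of_nat ((4*k) choose (2*k)) / 32 ^ k)
           (of_int (if (7::nat) = 1 \<or> (7::nat) = 3 then 1 else -1)) (int p)"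
      by (rule case_lemma[OF pr od Xp_pos[OF h]]) auto
    thus ?thesis using h by simp
  next
    assume h: "p mod 16 = 9"
    hence h': "p mod 16 = 1 + 8" by simp
    have "rat_cong (\<Sum>k = 0..p div 4. of_nat ((4*k) choose (2*k)) / 32 ^ k)
           (of_int (if (1::nat) = 1 \<or> (1::nat) = 3 then -1 else - (-1))) (int p)"
      by (rule case_lemma[OF pr od Xp_neg[OF h']]) auto
    thus ?thesis using h by simp
  next
    assume h: "p mod 16 = 11"
    hence h': "p mod 16 = 3 + 8" by simp
    have "rat_cong (\<Sum>k = 0..p div 4. of_nat ((4*k) choose (2*k)) / 32 ^ k)
           (of_int (if (3::nat) = 1 \<or> (3::nat) = 3 then -1 else - (-1))) (int p)"
      by (rule case_lemma[OF pr od Xp_neg[OF h']]) auto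
    thus ?thesis using h by simp
  next
    assume h: "p mod 16 = 13"
    hence h': "p mod 16 = 5 + 8" by simp
    have "rat_cong (\<Sum>k = 0..p div 4. of_nat ((4*k) choose (2*k)) / 32 ^ k)
           (of_int (if (5::nat) = 1 \<or> (5::nat) = 3 then -1 else - (-1))) (int p)"
      by (rule case_lemma[OF pr od Xp_neg[OF h']]) auto
    thus ?thesis using h by simp
  next
    assume h: "p mod 16 = 15"
    hence h': "p mod 16 = 7 + 8" by simp
    have "rat_cong (\<Sum>k = 0..p div 4. of_nat ((4*k) choose (2*k)) / 32 ^ k)
           (of_int (if (7::nat) = 1 \<or> (7::nat) = 3 then -1 else - (-1))) (int p)"
      by (rule case_lemma[OF pr od Xp_neg[OF h']]) auto
    thus ?thesis using h by simp
  qed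
qed

end
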